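(* Let $\mathcal{F}$ satisfy the standard conditions and be closed under the minimizer operation. Then $\mathbb{R}_{\mathcal{F}}$ is a real closed field.
   Context: $\mathbb{N}=\{0,1,2,\dots\}$. $\mathcal{F}$ is a set of functions $\mathbb{N}^n\to\mathbb{N}$; it satisfies the standard conditions if it contains the zero function, the successor, all projections $P^n_i$, addition, multiplication and modified subtraction $x\dot- y=\max(x-y,0)$, and is closed under composition. For $f:\mathbb{N}^{k+1}\to\mathbb{N}$, $\mu f(x_1,\dots,x_{k+1})=\min\{j: f(x_1,\dots,x_k,j)=0\ \text{or}\ j=x_{k+1}\}$; $\mathcal{F}$ is closed under the minimizer operation if $f\in\mathcal{F}\Rightarrow\mu f\in\mathcal{F}$. An $\mathcal{F}$-sequence is $A(x)=\frac{f(x)-g(x)}{h(x)+1}$ with $f,g,h:\mathbb{N}\to\mathbb{N}$ in $\mathcal{F}$. $\alpha\in\mathbb{R}$ is $\mathcal{F}$-computable if some $\mathcal{F}$-sequence $A$ satisfies $|A(x)-\alpha|\le\frac1{x+1}$ for all $x$; $\mathbb{R}_{\mathcal{F}}$ is the set of $\mathcal{F}$-computable reals. *)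

theory Defs
  imports "HOL-Computational_Algebra.Polynomial"
begin

text \<open>A class of number-theoretic functions is represented as a set of pairs (n, f),
  where n is the arity and f :: nat list \<Rightarrow> nat; only the values of f on
  argument lists of length n are relevant.\<close>

type_synonym fclass = "(nat \<times> (nat list \<Rightarrow> nat)) set"

definition in_F :: "fclass \<Rightarrow> nat \<Rightarrow> (nat list \<Rightarrow> nat) \<Rightarrow> bool" where
  "in_F F n f \<longleftrightarrow> (\<exists>g. (n, g) \<in> F \<and> (\<forall>xs. length xs = n \<longrightarrow> g xs = f xs))"

definition standard_conditions :: "fclass \<Rightarrow> bool" where
  "standard_conditions F \<longleftrightarrow>
     in_F F 1 (\<lambda>xs. 0) \<and>
     in_F F 1 (\<lambda>xs. Suc (xs ! 0)) \<and>
     (\<forall>n i. 1 \<le> i \<and> i \<le> n \<longrightarrow> in_F F n (\<lambda>xs. xs ! (i - 1))) \<and>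
     in_F F 2 (\<lambda>xs. xs ! 0 + xs ! 1) \<and>
     in_F F 2 (\<lambda>xs. xs ! 0 * xs ! 1) \<and>
     in_F F 2 (\<lambda>xs. xs ! 0 - xs ! 1) \<and>
     (\<forall>m n f gs. in_F F m f \<and> length gs = m \<and> (\<forall>g \<in> set gs. in_F F n g)
        \<longrightarrow> in_F F n (\<lambda>xs. f (map (\<lambda>g. g xs) gs)))"

definition minimizer :: "(nat list \<Rightarrow> nat) \<Rightarrow> nat list \<Rightarrow> nat" where
  "minimizer f xs = (LEAST j. f (butlast xs @ [j]) = 0 \<or> j = last xs)"

definition closed_under_minimizer :: "fclass \<Rightarrow> bool" where
  "closed_under_minimizer F \<longleftrightarrow>
     (\<forall>k f. in_F F (Suc k) f \<longrightarrow> in_F F (Suc k) (minimizer f))"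

definition F_sequence :: "fclass \<Rightarrow> (nat \<Rightarrow> real) \<Rightarrow> bool" where
  "F_sequence F A \<longleftrightarrow> (\<exists>f g h. in_F F 1 (\<lambda>xs. f (xs ! 0)) \<and> in_F F 1 (\<lambda>xs. g (xs ! 0))
      \<and> in_F F 1 (\<lambda>xs. h (xs ! 0))
      \<and> (\<forall>x. A x = (real (f x) - real (g x)) / (real (h x) + 1)))"

definition F_computable :: "fclass \<Rightarrow> real \<Rightarrow> bool" where
  "F_computable F \<alpha> \<longleftrightarrow> (\<exists>A. F_sequence F A \<and> (\<forall>x. \<bar>A x - \<alpha>\<bar> \<le> 1 / (real x + 1)))"

definition F_reals :: "fclass \<Rightarrow> real set" where
  "F_reals F = {\<alpha>. F_computable F \<alpha>}"

text \<open>A subfield of the reals which is real closed: every nonnegative element has a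
  square root in it and every odd-degree polynomial with coefficients in it has a root in it
  (Artin--Schreier characterization of real closed fields, for subfields of an ordered field).\<close>

definition real_subfield :: "real set \<Rightarrow> bool" where
  "real_subfield S \<longleftrightarrow> 0 \<in> S \<and> 1 \<in> S \<and>
     (\<forall>x\<in>S. \<forall>y\<in>S. x + y \<in> S \<and> x - y \<in> S \<and> x * y \<in> S) \<and>
     (\<forall>x\<in>S. x \<noteq> 0 \<longrightarrow> inverse x \<in> S)"

definition real_closed_subfield :: "real set \<Rightarrow> bool" where
  "real_closed_subfield S \<longleftrightarrow> real_subfield S \<and>
     (\<forall>x\<in>S. x \<ge> 0 \<longrightarrow> (\<exists>y\<in>S. y * y = x)) \<and>
     (\<forall>p :: real poly. (\<forall>i. coeff p i \<in> S) \<and> odd (degree p) \<longrightarrow> (\<exists>x\<in>S. poly p x = 0))"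

end

theory Submission
  imports Defs
begin

lemma in_F_cong: "in_F F n f \<Longrightarrow> (\<And>xs. length xs = n \<Longrightarrow> f xs = g xs) \<Longrightarrow> in_F F n g"
  unfolding in_F_def by metis

locale Fctx =
  fixes F :: fclass
  assumes sc: "standard_conditions F" and cm: "closed_under_minimizer F"
begin

abbreviation "Fn n f \<equiv> in_F F n f"

lemma Fn_proj: "i < n \<Longrightarrow> Fn n (\<lambda>xs. xs ! i)"
proof -
  assume "i < n"
  hence "1 \<le> Suc i \<and> Suc i \<le> n" by simp
  hence "Fn n (\<lambda>xs. xs ! (Suc i - 1))" using sc unfolding standard_conditions_def by blast
  thus ?thesis by simp
qed

lemma Fn_comp: "in_F F m f \<Longrightarrow> length gs = m \<Longrightarrow> (\<forall>g\<in>set gs. Fn n g) \<Longrightarrow> Fn n (\<lambda>xs. f (map (\<lambda>g. g xs) gs))"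
  using sc unfolding standard_conditions_def by blast

lemma Fn_comp1: "Fn 1 u \<Longrightarrow> Fn n f \<Longrightarrow> Fn n (\<lambda>xs. u [f xs])"
  using Fn_comp[of 1 u "[f]" n] by simp

lemma Fn_comp2: "Fn 2 u \<Longrightarrow> Fn n f \<Longrightarrow> Fn n g \<Longrightarrow> Fn n (\<lambda>xs. u [f xs, g xs])"
  using Fn_comp[of 2 u "[f,g]" n] by simp

lemma Fn_add: "Fn n f \<Longrightarrow> Fn n g \<Longrightarrow> Fn n (\<lambda>xs. f xs + g xs)"
proof -
  assume a: "Fn n f" "Fn n g"
  have "Fn 2 (\<lambda>xs. xs ! 0 + xs ! 1)" using sc unfolding standard_conditions_def by blast
  from Fn_comp2[OF this a] show ?thesis by simp
qed

lemma Fn_mult: "Fn n f \<Longrightarrow> Fn n g \<Longrightarrow> Fn n (\<lambda>xs. f xs * g xs)"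
proof -
  assume a: "Fn n f" "Fn n g"
  have "Fn 2 (\<lambda>xs. xs ! 0 * xs ! 1)" using sc unfolding standard_conditions_def by blast
  from Fn_comp2[OF this a] show ?thesis by simp
qed

lemma Fn_sub: "Fn n f \<Longrightarrow> Fn n g \<Longrightarrow> Fn n (\<lambda>xs. f xs - g xs)"
proof -
  assume a: "Fn n f" "Fn n g"
  have "Fn 2 (\<lambda>xs. xs ! 0 - xs ! 1)" using sc unfolding standard_conditions_def by blast
  from Fn_comp2[OF this a] show ?thesis by simp
qed

lemma Fn_const: "0 < n \<Longrightarrow> Fn n (\<lambda>xs. c)"
proof (induction c)
  case 0
  have "Fn 1 (\<lambda>xs. 0)" using sc unfolding standard_conditions_def by blast
  from Fn_comp1[OF this Fn_proj[OF 0]] show ?case by simp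
next
  case (Suc c)
  have "Fn 1 (\<lambda>xs. Suc (xs ! 0))" using sc unfolding standard_conditions_def by blast
  from Fn_comp1[OF this Suc.IH[OF Suc.prems]] show ?case by simp
qed

lemma Fn_power: "0 < n \<Longrightarrow> Fn n f \<Longrightarrow> Fn n (\<lambda>xs. f xs ^ k)"
  by (induction k) (auto intro: Fn_mult Fn_const)

lemma Fn_min: "Fn 2 T \<Longrightarrow> Fn n f \<Longrightarrow> Fn n b \<Longrightarrow>
   Fn n (\<lambda>xs. LEAST j. T [f xs, j] = 0 \<or> j = b xs)"
proof -
  assume a: "Fn 2 T" "Fn n f" "Fn n b"
  have "Fn (Suc 1) (minimizer T)" using cm a(1) unfolding closed_under_minimizer_def
    by (metis Suc_1)
  hence "Fn 2 (minimizer T)" by (simp add: numeral_2_eq_2)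
  from Fn_comp2[OF this a(2,3)] show ?thesis by (simp add: minimizer_def)
qed

lemma pos_aux: "(x::real) \<ge> 0 \<Longrightarrow> x + 1 \<noteq> 0" by simp

lemma frac_add_eq: "(h1::real) \<ge> 0 \<Longrightarrow> h2 \<ge> 0 \<Longrightarrow>
  (f1-g1)/(h1+1) + (f2-g2)/(h2+1) = ((f1*(h2+1)+f2*(h1+1)) - (g1*(h2+1)+g2*(h1+1)))/((h1*h2+h1+h2)+1)"
  by (simp add: field_simps)

definition Frat :: "nat \<Rightarrow> (nat list \<Rightarrow> real) \<Rightarrow> bool" where
  "Frat n Q \<longleftrightarrow> (\<exists>f g h. Fn n f \<and> Fn n g \<and> Fn n h \<and>
     (\<forall>xs. length xs = n \<longrightarrow> Q xs = (real (f xs) - real (g xs)) / (real (h xs) + 1)))"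

lemma Frat_cong: "Frat n Q \<Longrightarrow> (\<And>xs. length xs = n \<Longrightarrow> Q xs = R xs) \<Longrightarrow> Frat n R"
  unfolding Frat_def by metis

lemma Frat_nat: "0 < n \<Longrightarrow> Fn n f \<Longrightarrow> Frat n (\<lambda>xs. real (f xs))"
  unfolding Frat_def
  by (rule exI[of _ f], rule exI[of _ "\<lambda>_. 0"], rule exI[of _ "\<lambda>_. 0"]) (auto intro: Fn_const)

lemma Frat_const: "0 < n \<Longrightarrow> Frat n (\<lambda>xs. real c)"
  using Frat_nat[OF _ Fn_const] by blast

lemma Frat_neg: "Frat n Q \<Longrightarrow> Frat n (\<lambda>xs. - Q xs)"
  unfolding Frat_def
proof (elim exE conjE)
  fix f g h assume a: "Fn n f" "Fn n g" "Fn n h" "\<forall>xs. length xs = n \<longrightarrow> Q xs = (real (f xs) - real (g xs)) / (real (h xs) + 1)"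
  show "\<exists>f g h. Fn n f \<and> Fn n g \<and> Fn n h \<and> (\<forall>xs. length xs = n \<longrightarrow> - Q xs = (real (f xs) - real (g xs)) / (real (h xs) + 1))"
    by (rule exI[of _ g], rule exI[of _ f], rule exI[of _ h]) (use a in \<open>auto simp: field_simps\<close>)
qed

lemma FratI: "Fn n f \<Longrightarrow> Fn n g \<Longrightarrow> Fn n h \<Longrightarrow>
   (\<And>xs. length xs = n \<Longrightarrow> Q xs = (real (f xs) - real (g xs)) / (real (h xs) + 1)) \<Longrightarrow> Frat n Q"
  unfolding Frat_def by blast

lemma FratE: assumes "Frat n Q"
  obtains f g h where "Fn n f" "Fn n g" "Fn n h"
   "\<And>xs. length xs = n \<Longrightarrow> Q xs = (real (f xs) - real (g xs)) / (real (h xs) + 1)"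
  using assms unfolding Frat_def by blast

lemma Frat_add: assumes n: "0 < n" and "Frat n P" "Frat n Q" shows "Frat n (\<lambda>xs. P xs + Q xs)"
proof -
  obtain f g h where a: "Fn n f" "Fn n g" "Fn n h"
   "\<And>xs. length xs = n \<Longrightarrow> P xs = (real (f xs) - real (g xs)) / (real (h xs) + 1)" using assms FratE by metis
  obtain f2 g2 h2 where b: "Fn n f2" "Fn n g2" "Fn n h2"
   "\<And>xs. length xs = n \<Longrightarrow> Q xs = (real (f2 xs) - real (g2 xs)) / (real (h2 xs) + 1)" using assms FratE by metis
  show ?thesis
    apply (rule FratI[where f="\<lambda>xs. f xs * (h2 xs + 1) + f2 xs * (h xs + 1)"
       and g="\<lambda>xs. g xs * (h2 xs + 1) + g2 xs * (h xs + 1)" and h="\<lambda>xs. h xs * h2 xs + h xs + h2 xs"])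
    using a b n by (intro Fn_add Fn_mult Fn_const; simp?; fail)+ (simp add: a(4) b(4) field_simps pos_aux)
qed

lemma Frat_mult: assumes n: "0 < n" and "Frat n P" "Frat n Q" shows "Frat n (\<lambda>xs. P xs * Q xs)"
proof -
  obtain f g h where a: "Fn n f" "Fn n g" "Fn n h"
   "\<And>xs. length xs = n \<Longrightarrow> P xs = (real (f xs) - real (g xs)) / (real (h xs) + 1)" using assms FratE by metis
  obtain f2 g2 h2 where b: "Fn n f2" "Fn n g2" "Fn n h2"
   "\<And>xs. length xs = n \<Longrightarrow> Q xs = (real (f2 xs) - real (g2 xs)) / (real (h2 xs) + 1)" using assms FratE by metis
  show ?thesis
    apply (rule FratI[where f="\<lambda>xs. f xs * f2 xs + g xs * g2 xs"
       and g="\<lambda>xs. f xs * g2 xs + g xs * f2 xs" and h="\<lambda>xs. h xs * h2 xs + h xs + h2 xs"])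
    using a b n by (intro Fn_add Fn_mult Fn_const; simp?; fail)+ (simp add: a(4) b(4) field_simps pos_aux)
qed

lemma Frat_inverse: assumes n: "0 < n" and "Frat n P" shows "Frat n (\<lambda>xs. inverse (P xs))"
proof -
  obtain f g h where a: "Fn n f" "Fn n g" "Fn n h"
   "\<And>xs. length xs = n \<Longrightarrow> P xs = (real (f xs) - real (g xs)) / (real (h xs) + 1)" using assms FratE by metis
  show ?thesis
    apply (rule FratI[where f="\<lambda>xs. (h xs + 1) * (1 - (1 - (f xs - g xs)))"
       and g="\<lambda>xs. (h xs + 1) * (1 - (1 - (g xs - f xs)))" and h="\<lambda>xs. (f xs - g xs) + (g xs - f xs) - 1"])
    using a n apply (intro Fn_add Fn_mult Fn_const Fn_sub; simp?; fail)+
    subgoal for xs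
      apply (subst a(4), assumption)
      by (cases "f xs < g xs"; cases "g xs < f xs") (auto simp: of_nat_diff pos_aux field_simps)
    done
qed

lemma Frat_test: assumes "Frat n Q" obtains T where "Fn n T" "\<And>xs. length xs = n \<Longrightarrow> T xs = 0 \<longleftrightarrow> Q xs \<le> 0"
proof -
  obtain f g h where a: "Fn n f" "Fn n g" "Fn n h"
   "\<And>xs. length xs = n \<Longrightarrow> Q xs = (real (f xs) - real (g xs)) / (real (h xs) + 1)" using assms FratE by metis
  have "Fn n (\<lambda>xs. f xs - g xs)" using a by (intro Fn_sub)
  moreover have "(f xs - g xs = 0) \<longleftrightarrow> Q xs \<le> 0" if "length xs = n" for xs
    using a(4)[OF that] by (simp add: divide_le_0_iff pos_aux add_nonneg_pos)
  ultimately show ?thesis using that by blast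
qed

lemma Frat_comp1: assumes "Frat 1 Q" "Fn n u" shows "Frat n (\<lambda>xs. Q [u xs])"
proof -
  obtain f g h where a: "Fn 1 f" "Fn 1 g" "Fn 1 h"
   "\<And>xs. length xs = 1 \<Longrightarrow> Q xs = (real (f xs) - real (g xs)) / (real (h xs) + 1)" using assms FratE by metis
  show ?thesis
    by (rule FratI[where f="\<lambda>xs. f [u xs]" and g="\<lambda>xs. g [u xs]" and h="\<lambda>xs. h [u xs]"])
      (use a assms in \<open>auto intro: Fn_comp1\<close>)
qed

lemma Frat_comp2: assumes "Frat 2 Q" "Fn n u" "Fn n v" shows "Frat n (\<lambda>xs. Q [u xs, v xs])"
proof -
  obtain f g h where a: "Fn 2 f" "Fn 2 g" "Fn 2 h"
   "\<And>xs. length xs = 2 \<Longrightarrow> Q xs = (real (f xs) - real (g xs)) / (real (h xs) + 1)" using assms FratE by metis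
  show ?thesis
    by (rule FratI[where f="\<lambda>xs. f [u xs, v xs]" and g="\<lambda>xs. g [u xs, v xs]" and h="\<lambda>xs. h [u xs, v xs]"])
      (use a assms in \<open>auto intro: Fn_comp2\<close>)
qed

lemma Frat_sub: "0 < n \<Longrightarrow> Frat n P \<Longrightarrow> Frat n Q \<Longrightarrow> Frat n (\<lambda>xs. P xs - Q xs)"
  using Frat_add[of n P "\<lambda>xs. - Q xs"] Frat_neg[of n Q] by simp

lemma Frat_divide: "0 < n \<Longrightarrow> Frat n P \<Longrightarrow> Frat n Q \<Longrightarrow> Frat n (\<lambda>xs. P xs / Q xs)"
  using Frat_mult[of n P "\<lambda>xs. inverse (Q xs)"] Frat_inverse[of n Q] by (simp add: field_simps)

lemma Frat_int: "0 < n \<Longrightarrow> Frat n (\<lambda>xs. real_of_int c)"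
proof (cases "c \<ge> 0")
  case True
  assume n: "0 < n"
  from Frat_const[OF n, of "nat c"] True show ?thesis by simp
next
  case False
  assume n: "0 < n"
  from Frat_neg[OF Frat_const[OF n, of "nat (- c)"]] False show ?thesis by simp
qed

lemma Frat_power: "0 < n \<Longrightarrow> Frat n P \<Longrightarrow> Frat n (\<lambda>xs. P xs ^ k)"
proof (induction k)
  case 0 then show ?case using Frat_const[of n 1] by simp
next
  case (Suc k) then show ?case using Frat_mult[of n P "\<lambda>xs. P xs ^ k"] by simp
qed

lemma Frat_sum: assumes "0 < n" "finite I" "\<And>i. i \<in> I \<Longrightarrow> Frat n (P i)" shows "Frat n (\<lambda>xs. \<Sum>i\<in>I. P i xs)"
  using assms(2,3) 
proof (induction I rule: finite_induct)
  case empty then show ?case using Frat_const[of n 0] assms(1) by simp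
next
  case (insert i I) then show ?case using Frat_add[of n "P i" "\<lambda>xs. \<Sum>i\<in>I. P i xs"] assms(1) by simp
qed

lemma Freals_D: assumes "\<alpha> \<in> F_reals F" obtains Q where "Frat 1 Q" "\<And>x. \<bar>Q [x] - \<alpha>\<bar> \<le> 1 / (real x + 1)"
proof -
  from assms obtain A f g h where a: "Fn 1 (\<lambda>xs. f (xs ! 0))" "Fn 1 (\<lambda>xs. g (xs ! 0))" "Fn 1 (\<lambda>xs. h (xs ! 0))"
    "\<forall>x. A x = (real (f x) - real (g x)) / (real (h x) + 1)" "\<forall>x. \<bar>A x - \<alpha>\<bar> \<le> 1 / (real x + 1)"
    unfolding F_reals_def F_computable_def F_sequence_def by blast
  have "Frat 1 (\<lambda>xs. A (xs ! 0))"
    by (rule FratI[OF a(1-3)]) (use a(4) in simp)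
  then show ?thesis using that a(5) by auto
qed

lemma Freals_I: assumes "Frat 1 Q" "\<And>x. \<bar>Q [x] - \<alpha>\<bar> \<le> 1 / (real x + 1)" shows "\<alpha> \<in> F_reals F"
proof -
  obtain f g h where a: "Fn 1 f" "Fn 1 g" "Fn 1 h"
   "\<And>xs. length xs = 1 \<Longrightarrow> Q xs = (real (f xs) - real (g xs)) / (real (h xs) + 1)" using assms FratE by metis
  have l1: "xs = [xs ! 0]" if "length xs = 1" for xs :: "nat list"
    using that by (cases xs) auto
  have b: "Fn 1 (\<lambda>xs. f' [xs ! 0])" if "Fn 1 f'" for f'
    apply (rule in_F_cong[OF that])
    subgoal for xs by (cases xs) auto
    done
  show ?thesis unfolding F_reals_def F_computable_def F_sequence_def mem_Collect_eq
    apply (rule exI[of _ "\<lambda>x. Q [x]"])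
    apply (rule conjI)
     apply (rule exI[of _ "\<lambda>x. f [x]"], rule exI[of _ "\<lambda>x. g [x]"], rule exI[of _ "\<lambda>x. h [x]"])
    using b[OF a(1)] b[OF a(2)] b[OF a(3)] a(4) by (simp, use assms(2) in blast)
qed

lemma Freals_approx: assumes "Frat 1 Q" "0 < K" "\<And>x. \<bar>Q [x] - \<alpha>\<bar> \<le> real K / (real x + 1)"
  shows "\<alpha> \<in> F_reals F"
proof (rule Freals_I)
  have u: "Fn 1 (\<lambda>xs. K * xs ! 0 + (K - 1))" by (intro Fn_add Fn_mult Fn_const Fn_proj) auto
  show "Frat 1 (\<lambda>xs. Q [K * xs ! 0 + (K - 1)])" by (rule Frat_comp1[OF assms(1) u])
  fix x
  have e: "real (K * [x] ! 0 + (K - 1)) + 1 = real K * (real x + 1)" using assms(2)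
  proof -
    have "K * x + (K - 1) + 1 = K * (x + 1)" using assms(2) by (cases K) auto
    hence "real (K * x + (K - 1) + 1) = real (K * (x + 1))" by metis
    thus ?thesis by (simp add: algebra_simps)
  qed
  have "\<bar>Q [K * [x] ! 0 + (K - 1)] - \<alpha>\<bar> \<le> real K / (real (K * [x] ! 0 + (K - 1)) + 1)" by (rule assms(3))
  also have "\<dots> = 1 / (real x + 1)" unfolding e using assms(2) by simp
  finally show "\<bar>Q [K * [x] ! 0 + (K - 1)] - \<alpha>\<bar> \<le> 1 / (real x + 1)" .
qed

end

context Fctx begin

lemma Freals_nat: "real c \<in> F_reals F"
  by (rule Freals_I[OF Frat_const[of 1 c]]) auto

lemma Freals_add: assumes "\<alpha> \<in> F_reals F" "\<beta> \<in> F_reals F" shows "\<alpha> + \<beta> \<in> F_reals F"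
proof -
  obtain P where P: "Frat 1 P" "\<And>x. \<bar>P [x] - \<alpha>\<bar> \<le> 1 / (real x + 1)" using assms(1) Freals_D by blast
  obtain Q where Q: "Frat 1 Q" "\<And>x. \<bar>Q [x] - \<beta>\<bar> \<le> 1 / (real x + 1)" using assms(2) Freals_D by blast
  show ?thesis
  proof (rule Freals_approx[OF Frat_add[OF _ P(1) Q(1)], of 2])
    fix x
    have "\<bar>P [x] + Q [x] - (\<alpha> + \<beta>)\<bar> \<le> \<bar>P [x] - \<alpha>\<bar> + \<bar>Q [x] - \<beta>\<bar>" by linarith
    also have "\<dots> \<le> 1 / (real x + 1) + 1 / (real x + 1)" using P(2) Q(2) by (intro add_mono)
    finally show "\<bar>P [x] + Q [x] - (\<alpha> + \<beta>)\<bar> \<le> real 2 / (real x + 1)" by (simp add: field_simps)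
  qed auto
qed

lemma Freals_neg: assumes "\<alpha> \<in> F_reals F" shows "- \<alpha> \<in> F_reals F"
proof -
  obtain P where P: "Frat 1 P" "\<And>x. \<bar>P [x] - \<alpha>\<bar> \<le> 1 / (real x + 1)" using assms(1) Freals_D by blast
  show ?thesis
  proof (rule Freals_I[OF Frat_neg[OF P(1)]])
    fix x show "\<bar>- P [x] - - \<alpha>\<bar> \<le> 1 / (real x + 1)" using P(2)[of x] by linarith
  qed
qed

lemma Freals_mult: assumes "\<alpha> \<in> F_reals F" "\<beta> \<in> F_reals F" shows "\<alpha> * \<beta> \<in> F_reals F"
proof -
  obtain P where P: "Frat 1 P" "\<And>x. \<bar>P [x] - \<alpha>\<bar> \<le> 1 / (real x + 1)" using assms(1) Freals_D by blast
  obtain Q where Q: "Frat 1 Q" "\<And>x. \<bar>Q [x] - \<beta>\<bar> \<le> 1 / (real x + 1)" using assms(2) Freals_D by blast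
  define K where "K = nat \<lceil>\<bar>\<alpha>\<bar> + \<bar>\<beta>\<bar> + 1\<rceil>"
  have K: "\<bar>\<alpha>\<bar> + \<bar>\<beta>\<bar> + 1 \<le> real K" unfolding K_def by linarith
  show ?thesis
  proof (rule Freals_approx[OF Frat_mult[OF _ P(1) Q(1)], of K])
    show "0 < K" using K by linarith
    fix x
    define e where "e = 1 / (real x + 1)"
    have e0: "0 \<le> e" "e \<le> 1" unfolding e_def by auto
    have pb: "\<bar>P [x]\<bar> \<le> \<bar>\<alpha>\<bar> + 1" using P(2)[of x] e0 unfolding e_def[symmetric] by linarith
    have "P [x] * Q [x] - \<alpha> * \<beta> = P [x] * (Q [x] - \<beta>) + \<beta> * (P [x] - \<alpha>)" by (simp add: algebra_simps)
    hence "\<bar>P [x] * Q [x] - \<alpha> * \<beta>\<bar> \<le> \<bar>P [x]\<bar> * \<bar>Q [x] - \<beta>\<bar> + \<bar>\<beta>\<bar> * \<bar>P [x] - \<alpha>\<bar>"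
      by (metis abs_mult abs_triangle_ineq)
    also have "\<dots> \<le> (\<bar>\<alpha>\<bar> + 1) * e + \<bar>\<beta>\<bar> * e"
      using P(2)[of x] Q(2)[of x] pb unfolding e_def[symmetric]
      by (intro add_mono mult_mono) auto
    also have "\<dots> \<le> real K * e" using mult_right_mono[OF K e0(1)] by (simp add: algebra_simps)
    finally show "\<bar>P [x] * Q [x] - \<alpha> * \<beta>\<bar> \<le> real K / (real x + 1)" unfolding e_def by simp
  qed auto
qed

lemma Freals_inverse: assumes "\<alpha> \<in> F_reals F" "\<alpha> \<noteq> 0" shows "inverse \<alpha> \<in> F_reals F"
proof -
  obtain P where P: "Frat 1 P" "\<And>x. \<bar>P [x] - \<alpha>\<bar> \<le> 1 / (real x + 1)" using assms(1) Freals_D by blast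
  define a where "a = \<bar>\<alpha>\<bar>"
  have a0: "a > 0" using assms(2) unfolding a_def by simp
  define N where "N = nat \<lceil>2 / a\<rceil>"
  have N: "2 / a \<le> real N" unfolding N_def by linarith
  define K where "K = nat \<lceil>2 / a^2\<rceil> + 1"
  have K: "2 / a^2 \<le> real K" unfolding K_def by linarith
  have u: "Fn 1 (\<lambda>xs. xs ! 0 + N)" by (intro Fn_add Fn_const Fn_proj) auto
  show ?thesis
  proof (rule Freals_approx[OF Frat_inverse[OF _ Frat_comp1[OF P(1) u]], of K])
    show "0 < K" unfolding K_def by simp
    fix x
    define y where "y = x + N"
    have ey: "1 / (real y + 1) \<le> a / 2"
    proof -
      have "2 / a < real y + 1" using N unfolding y_def by simp
      thus ?thesis using a0 by (simp add: field_simps)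
    qed
    have ey2: "1 / (real y + 1) \<le> 1 / (real x + 1)" unfolding y_def by (simp add: frac_le)
    have py: "\<bar>P [y] - \<alpha>\<bar> \<le> 1 / (real y + 1)" by (rule P(2))
    have pa: "\<bar>P [y]\<bar> \<ge> a / 2" using py ey unfolding a_def by linarith
    have "inverse (P [y]) - inverse \<alpha> = (\<alpha> - P [y]) / (P [y] * \<alpha>)"
      using pa a0 assms(2) by (auto simp: field_simps)
    hence "\<bar>inverse (P [y]) - inverse \<alpha>\<bar> = \<bar>P [y] - \<alpha>\<bar> / (\<bar>P [y]\<bar> * a)"
      unfolding a_def by (simp add: abs_mult abs_minus_commute)
    also have "\<dots> \<le> (1 / (real x + 1)) / ((a / 2) * a)"
      using py ey2 pa a0 by (intro frac_le mult_mono) auto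
    also have "\<dots> = (2 / a^2) / (real x + 1)" by (simp add: field_simps power2_eq_square)
    also have "\<dots> \<le> real K / (real x + 1)" by (rule divide_right_mono[OF K]) simp
    finally show "\<bar>inverse (P [[x] ! 0 + N]) - inverse \<alpha>\<bar> \<le> real K / (real x + 1)" unfolding y_def by simp
  qed auto
qed

lemma Freals_subfield: "real_subfield (F_reals F)"
  unfolding real_subfield_def
  using Freals_nat[of 0] Freals_nat[of 1] Freals_add Freals_mult Freals_inverse Freals_neg
proof (intro conjI ballI impI)
  show "0 \<in> F_reals F" using Freals_nat[of 0] by simp
  show "1 \<in> F_reals F" using Freals_nat[of 1] by simp
  fix x y assume xy: "x \<in> F_reals F" "y \<in> F_reals F"
  show "x + y \<in> F_reals F" using Freals_add[OF xy] .
  show "x * y \<in> F_reals F" using Freals_mult[OF xy] .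
  show "x - y \<in> F_reals F" using Freals_add[OF xy(1) Freals_neg[OF xy(2)]] by simp
next
  fix x assume "x \<in> F_reals F" "x \<noteq> 0" thus "inverse x \<in> F_reals F" by (rule Freals_inverse)
qed

end

context Fctx begin

lemma Freals_cut:
  fixes r :: real and ia :: int and N :: nat and Q :: "nat list \<Rightarrow> real"
  assumes N: "0 < N" and Q: "Frat 2 Q"
  and ar: "real_of_int ia / N \<le> r" "r \<le> (real_of_int ia + 1) / N"
  and H1: "\<And>x j. j \<le> x + 1 \<Longrightarrow> Q [x, j] \<le> 0 \<Longrightarrow> r \<le> real_of_int ia / N + (real j + 1) / (N * (real x + 1))"
  and H2: "\<And>x j. j \<le> x + 1 \<Longrightarrow> 0 < Q [x, j] \<Longrightarrow> real_of_int ia / N + (real j - 1) / (N * (real x + 1)) \<le> r"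
  shows "r \<in> F_reals F"
proof -
  obtain T where T: "Fn 2 T" "\<And>xs. length xs = 2 \<Longrightarrow> T xs = 0 \<longleftrightarrow> Q xs \<le> 0" using Frat_test[OF Q] by blast
  define J where "J x = (LEAST j. T [x, j] = 0 \<or> j = x + 1)" for x
  have p0: "Fn 1 (\<lambda>xs. xs ! 0)" by (rule Fn_proj) simp
  have "Fn 1 (\<lambda>xs. LEAST j. T [xs ! 0, j] = 0 \<or> j = xs ! 0 + 1)"
    by (rule Fn_min[OF T(1) p0]) (intro Fn_add Fn_const p0; simp)
  hence FJ: "Fn 1 (\<lambda>xs. J (xs ! 0))" unfolding J_def .
  have J1: "T [x, J x] = 0 \<or> J x = x + 1" for x unfolding J_def by (rule LeastI[of _ "x + 1"]) simp
  have J2: "J x \<le> x + 1" for x unfolding J_def by (rule Least_le) simp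
  have J3: "T [x, j] \<noteq> 0" if "j < J x" for x j using not_less_Least[of j "\<lambda>j. T [x, j] = 0 \<or> j = x + 1"] that unfolding J_def by auto
  define a where "a = real_of_int ia / N"
  define R where "R xs = a + real (J (xs ! 0)) / (real N * (real (xs ! 0) + 1))" for xs
  have f1: "Frat 1 (\<lambda>xs. real_of_int ia)" by (rule Frat_int) simp
  have f2: "Frat 1 (\<lambda>xs. real N)" by (rule Frat_const) simp
  have f3: "Frat 1 (\<lambda>xs. real (J (xs ! 0)))" by (rule Frat_nat[OF _ FJ]) simp
  have f4: "Frat 1 (\<lambda>xs. real (xs ! 0))" by (rule Frat_nat[OF _ p0]) simp
  have f5: "Frat 1 (\<lambda>xs. real (xs ! 0) + 1)" using Frat_add[OF _ f4 Frat_const[of 1 1]] by simp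
  have FR: "Frat 1 R" unfolding R_def a_def
    by (intro Frat_add Frat_divide Frat_mult f1 f2 f3 f5) simp_all
  show ?thesis
  proof (rule Freals_approx[OF FR, of 2])
    fix x
    define e where "e = 1 / (real N * (real x + 1))"
    have e0: "0 < e" using N unfolding e_def by simp
    have ee: "real N * (real x + 1) * e = 1" using N unfolding e_def by simp
    have "1 * (real x + 1) \<le> real N * (real x + 1)" using N by (intro mult_right_mono) auto
    hence e2: "e \<le> 1 / (real x + 1)" unfolding e_def 
      by (intro divide_left_mono) auto
    have up: "r \<le> a + (real (J x) + 1) * e"
    proof (cases "T [x, J x] = 0")
      case True
      hence "Q [x, J x] \<le> 0" using T(2)[of "[x, J x]"] by simp
      from H1[OF J2 this] show ?thesis unfolding a_def e_def by simp
    next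
      case False
      hence "J x = x + 1" using J1[of x] by auto
      have "r \<le> a + 1 / N" using ar(2) unfolding a_def by (simp add: add_divide_distrib)
      moreover have "1 / N = (real x + 1) * e" unfolding e_def using N by simp
      moreover have "(real x + 1) * e \<le> (real (J x) + 1) * e" using \<open>J x = x + 1\<close> e0 by simp
      ultimately show ?thesis by linarith
    qed
    have lo: "a + (real (J x) - 2) * e \<le> r"
    proof (cases "J x = 0")
      case True
      thus ?thesis using ar(1) e0 unfolding a_def by simp
    next
      case False
      hence lt: "J x - 1 < J x" by simp
      hence "Q [x, J x - 1] > 0" using J3[OF lt] T(2)[of "[x, J x - 1]"] by simp
      from H2[OF _ this] J2[of x] have "a + (real (J x - 1) - 1) * e \<le> r" unfolding a_def e_def by simp
      thus ?thesis using False by (simp add: of_nat_diff)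
    qed
    have "R [x] = a + real (J x) * e" unfolding R_def e_def by simp
    hence "\<bar>R [x] - r\<bar> \<le> 2 * e" using up lo by (simp add: algebra_simps abs_le_iff)
    also have "\<dots> \<le> real 2 / (real x + 1)" using e2 by simp
    finally show "\<bar>R [x] - r\<bar> \<le> real 2 / (real x + 1)" .
  qed simp
qed

end

lemma poly_cont_lower:
  fixes g :: "real poly" assumes "poly g r > 0"
  obtains \<eta> where "\<eta> > 0" "\<And>t. \<bar>t - r\<bar> \<le> \<eta> \<Longrightarrow> poly g t \<ge> poly g r / 2"
proof -
  have "(\<lambda>x. poly g x) \<midarrow>r\<rightarrow> poly g r" using poly_isCont[of r g] unfolding isCont_def .
  from LIM_D[OF this, of "poly g r / 2"] assms obtain s where s: "s > 0"
    "\<And>x. x \<noteq> r \<and> norm (x - r) < s \<Longrightarrow> norm (poly g x - poly g r) < poly g r / 2" by auto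
  show ?thesis
  proof (rule that[of "s / 2"])
    show "s / 2 > 0" using s by simp
    fix t assume t: "\<bar>t - r\<bar> \<le> s / 2"
    show "poly g t \<ge> poly g r / 2"
    proof (cases "t = r")
      case True then show ?thesis using assms by simp
    next
      case False
      with t s have "norm (poly g t - poly g r) < poly g r / 2" by (intro s(2)) auto
      hence "\<bar>poly g t - poly g r\<bar> < poly g r / 2" by simp
      thus ?thesis by linarith
    qed
  qed
qed

lemma poly_sign_bounds:
  fixes g :: "real poly"
  assumes "odd k" "\<And>t. \<bar>t - r\<bar> \<le> \<eta> \<Longrightarrow> poly g t \<ge> D" "D > 0" "e > 0" "\<bar>t - r\<bar> \<le> \<eta>"
  shows "t \<le> r - e \<Longrightarrow> poly ([:-r,1:]^k * g) t \<le> - (e ^ k * D)"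
    and "t \<ge> r + e \<Longrightarrow> poly ([:-r,1:]^k * g) t \<ge> e ^ k * D"
proof -
  have g: "poly g t \<ge> D" using assms by blast
  have pe: "poly ([:-r,1:]^k * g) t = (t - r) ^ k * poly g t" by (simp add: poly_power)
  {
    assume "t \<le> r - e"
    hence "e ^ k \<le> (r - t) ^ k" using assms by (intro power_mono) auto
    moreover have "(t - r) ^ k = - ((r - t) ^ k)" using power_minus_odd[OF assms(1), of "r - t"] by simp
    ultimately have "(t - r) ^ k \<le> - (e ^ k)" by simp
    hence "(t - r) ^ k * poly g t \<le> - (e ^ k) * poly g t" using g assms(3) by (intro mult_right_mono) auto
    also have "\<dots> \<le> - (e ^ k) * D" using g assms by (intro mult_left_mono_neg) auto
    finally show "poly ([:-r,1:]^k * g) t \<le> - (e ^ k * D)" using pe by simp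
  }
  {
    assume "t \<ge> r + e"
    hence "e ^ k \<le> (t - r) ^ k" using assms by (intro power_mono) auto
    hence "e ^ k * D \<le> (t - r) ^ k * D" using assms by (intro mult_right_mono) auto
    also have "\<dots> \<le> (t - r) ^ k * poly g t" using g assms \<open>t \<ge> r + e\<close> by (intro mult_left_mono) auto
    finally show "poly ([:-r,1:]^k * g) t \<ge> e ^ k * D" using pe by simp
  }
qed

context Fctx begin

lemma Freals_root_core:
  fixes p g :: "real poly"
  assumes cf: "\<And>i. coeff p i \<in> F_reals F" and pg: "p = [:-r,1:]^k * g" and gr: "poly g r > 0" and k: "odd k"
  shows "r \<in> F_reals F"
proof -
  define D where "D = poly g r / 2"
  have D0: "D > 0" using gr unfolding D_def by simp
  obtain \<eta> where eta: "\<eta> > 0" "\<And>t. \<bar>t - r\<bar> \<le> \<eta> \<Longrightarrow> poly g t \<ge> D"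
    using poly_cont_lower[OF gr] unfolding D_def by blast
  define N where "N = nat \<lceil>1 / \<eta>\<rceil> + 1"
  have N0: "0 < N" unfolding N_def by simp
  have "1 / \<eta> < real N" unfolding N_def by linarith
  hence Neta: "1 / real N \<le> \<eta>" using eta(1) N0 by (simp add: field_simps)
  define ia where "ia = \<lfloor>r * N\<rfloor>"
  define a where "a = real_of_int ia / N"
  have ar1: "a \<le> r" unfolding a_def ia_def using N0 by (simp add: divide_le_eq)
  have ar2: "r \<le> (real_of_int ia + 1) / N" unfolding ia_def using N0
    by (simp add: le_divide_eq)
  have ar3: "r - a \<le> 1 / N" using ar2 unfolding a_def by (simp add: diff_divide_distrib add_divide_distrib)
  have "\<forall>i. \<exists>Q. Frat 1 Q \<and> (\<forall>x. \<bar>Q [x] - coeff p i\<bar> \<le> 1 / (real x + 1))"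
    using Freals_D[OF cf] by metis
  then obtain A where A: "\<And>i. Frat 1 (A i)" "\<And>i x. \<bar>A i [x] - coeff p i\<bar> \<le> 1 / (real x + 1)"
    by metis
  define d where "d = degree p"
  define R where "R = \<bar>a\<bar> + 1"
  have R1: "R \<ge> 1" unfolding R_def by simp
  define C where "C = nat \<lceil>(real d + 1) * R ^ d * real N ^ k / D\<rceil> + 1"
  have "(real d + 1) * R ^ d * real N ^ k / D < real C" unfolding C_def by linarith
  hence C: "(real d + 1) * R ^ d * real N ^ k < real C * D" using D0 by (simp add: divide_less_eq)
  have C1: "C \<ge> 1" unfolding C_def by simp
  define z where "z x = C * (x + 1) ^ k - 1" for x
  have zz: "real (z x) + 1 = real C * (real x + 1) ^ k" for x
  proof -
    have "1 \<le> C * (x + 1) ^ k" using C1 by (simp add: Suc_le_eq)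
    hence "real (z x) + 1 = real (C * (x + 1) ^ k)" unfolding z_def by (simp add: of_nat_diff)
    thus ?thesis by (simp add: add.commute)
  qed
  define t where "t x j = a + real j / (real N * (real x + 1))" for x j :: nat
  define P where "P x j = (\<Sum>i\<le>d. A i [z x] * t x j ^ i)" for x j
  define Q where "Q xs = - P (xs ! 0) (xs ! 1)" for xs
  have p0: "Fn 2 (\<lambda>xs. xs ! 0)" by (rule Fn_proj) simp
  have p1: "Fn 2 (\<lambda>xs. xs ! 1)" by (rule Fn_proj) simp
  have Fz: "Fn 2 (\<lambda>xs. z (xs ! 0))" unfolding z_def
    by (intro Fn_sub Fn_mult Fn_const Fn_power Fn_add p0) simp_all
  have FA: "Frat 2 (\<lambda>xs. A i [z (xs ! 0)])" for i by (rule Frat_comp1[OF A(1) Fz])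
  have f1: "Frat 2 (\<lambda>xs. real_of_int ia)" by (rule Frat_int) simp
  have f2: "Frat 2 (\<lambda>xs. real N)" by (rule Frat_const) simp
  have f3: "Frat 2 (\<lambda>xs. real (xs ! 1))" by (rule Frat_nat[OF _ p1]) simp
  have f4: "Frat 2 (\<lambda>xs. real (xs ! 0))" by (rule Frat_nat[OF _ p0]) simp
  have f5: "Frat 2 (\<lambda>xs. real (xs ! 0) + 1)" using Frat_add[OF _ f4 Frat_const[of 2 1]] by simp
  have Ft: "Frat 2 (\<lambda>xs. t (xs ! 0) (xs ! 1))" unfolding t_def a_def
    by (intro Frat_add Frat_divide Frat_mult f1 f2 f3 f5) simp_all
  have FP: "Frat 2 (\<lambda>xs. P (xs ! 0) (xs ! 1))" unfolding P_def
    by (intro Frat_sum Frat_mult Frat_power FA Ft) simp_all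
  have FQ: "Frat 2 Q" unfolding Q_def by (rule Frat_neg[OF FP])
  have tb: "a \<le> t x j \<and> t x j \<le> a + 1 / N" if j: "j \<le> x + 1" for x j
  proof -
    have "real j / (real N * (real x + 1)) \<le> (real x + 1) / (real N * (real x + 1))"
      using j N0 by (intro divide_right_mono) auto
    also have "\<dots> = 1 / N" using N0 by simp
    finally show ?thesis unfolding t_def using N0 by simp
  qed
  have err: "\<bar>P x j - poly p (t x j)\<bar> < D * (1 / (real N * (real x + 1))) ^ k" if j: "j \<le> x + 1" for x j
  proof -
    define T where "T = t x j"
    define E where "E = 1 / (real (z x) + 1)"
    have "1 / real N \<le> 1" using N0 by simp
    hence tR: "\<bar>T\<bar> \<le> R" using tb[OF j] unfolding T_def R_def by (auto simp: abs_le_iff)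
    have "P x j - poly p T = (\<Sum>i\<le>d. (A i [z x] - coeff p i) * T ^ i)"
      unfolding P_def poly_altdef d_def T_def by (simp add: sum_subtractf algebra_simps)
    hence "\<bar>P x j - poly p T\<bar> \<le> (\<Sum>i\<le>d. \<bar>(A i [z x] - coeff p i) * T ^ i\<bar>)"
      by (simp add: sum_abs)
    also have "\<dots> \<le> (\<Sum>i\<le>d. E * R ^ d)"
    proof (rule sum_mono)
      fix i assume i: "i \<in> {..d}"
      have "\<bar>T\<bar> ^ i \<le> R ^ i" using tR by (intro power_mono) auto
      also have "\<dots> \<le> R ^ d" using R1 i by (intro power_increasing) auto
      finally have "\<bar>T ^ i\<bar> \<le> R ^ d" by (simp add: power_abs)
      moreover have "\<bar>A i [z x] - coeff p i\<bar> \<le> E" using A(2)[of i "z x"] unfolding E_def .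
      ultimately show "\<bar>(A i [z x] - coeff p i) * T ^ i\<bar> \<le> E * R ^ d"
        by (simp add: abs_mult mult_mono')
    qed
    also have "\<dots> = (real d + 1) * R ^ d / (real C * (real x + 1) ^ k)"
      unfolding E_def zz by simp
    also have "\<dots> < D * (1 / (real N * (real x + 1))) ^ k"
    proof -
      have X: "(real x + 1) ^ k > 0" "real N ^ k > 0" "real C > 0" using N0 C1 by auto
      define XX where "XX = (real x + 1) ^ k"
      define M where "M = real N ^ k"
      have XM: "XX > 0" "M > 0" using X unfolding XX_def M_def by auto
      have e1: "(1 / (real N * (real x + 1))) ^ k = 1 / (M * XX)"
        unfolding XX_def M_def by (simp add: power_divide power_mult_distrib)
      have L: "(real d + 1) * R ^ d / (real C * XX) = ((real d + 1) * R ^ d * M) / (real C * XX * M)"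
        using XM X by simp
      have Rr: "D * (1 / (M * XX)) = (real C * D) / (real C * XX * M)" using XM X by simp
      have "((real d + 1) * R ^ d * M) / (real C * XX * M) < (real C * D) / (real C * XX * M)"
        using C XM X unfolding M_def by (intro divide_strict_right_mono) auto
      thus ?thesis unfolding e1 XX_def[symmetric] L Rr .
    qed
    finally show ?thesis unfolding T_def .
  qed
  show ?thesis
  proof (rule Freals_cut[OF N0 FQ])
    show "real_of_int ia / real N \<le> r" using ar1 unfolding a_def .
    show "r \<le> (real_of_int ia + 1) / real N" by (rule ar2)
  next
    fix x j assume j: "j \<le> x + 1" and q: "Q [x, j] \<le> 0"
    define e where "e = 1 / (real N * (real x + 1))"
    have e0: "e > 0" unfolding e_def using N0 by simp
    show "r \<le> real_of_int ia / real N + (real j + 1) / (real N * (real x + 1))"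
    proof (rule ccontr)
      assume "\<not> ?thesis"
      hence "t x j \<le> r - e" unfolding t_def e_def a_def by (simp add: add_divide_distrib)
      moreover have "\<bar>t x j - r\<bar> \<le> \<eta>" using tb[OF j] ar3 Neta \<open>t x j \<le> r - e\<close> e0 by (simp add: abs_le_iff)
      ultimately have "poly p (t x j) \<le> - (e ^ k * D)" unfolding pg
        by (intro poly_sign_bounds(1)[OF k eta(2) D0 e0]) auto
      moreover have "\<bar>P x j - poly p (t x j)\<bar> < D * e ^ k" using err[OF j] unfolding e_def .
      ultimately have "P x j < 0" by (simp add: abs_less_iff algebra_simps)
      thus False using q unfolding Q_def by simp
    qed
  next
    fix x j assume j: "j \<le> x + 1" and q: "0 < Q [x, j]"
    define e where "e = 1 / (real N * (real x + 1))"
    have e0: "e > 0" unfolding e_def using N0 by simp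
    show "real_of_int ia / real N + (real j - 1) / (real N * (real x + 1)) \<le> r"
    proof (rule ccontr)
      assume "\<not> ?thesis"
      hence "t x j \<ge> r + e" unfolding t_def e_def a_def by (simp add: diff_divide_distrib add_divide_distrib)
      moreover have "\<bar>t x j - r\<bar> \<le> \<eta>" using tb[OF j] ar1 Neta \<open>t x j \<ge> r + e\<close> e0 by (simp add: abs_le_iff)
      ultimately have "poly p (t x j) \<ge> e ^ k * D" unfolding pg
        by (intro poly_sign_bounds(2)[OF k eta(2) D0 e0]) auto
      moreover have "\<bar>P x j - poly p (t x j)\<bar> < D * e ^ k" using err[OF j] unfolding e_def .
      ultimately have "P x j > 0" by (simp add: abs_less_iff algebra_simps)
      thus False using q unfolding Q_def by simp
    qed
  qed
qed

end

lemma odd_degree_root_pos: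
  fixes p :: "real poly" assumes d: "odd (degree p)" and lc: "lead_coeff p > 0"
  shows "\<exists>x. poly p x = 0"
proof -
  have dp: "degree p \<noteq> 0" using d by (metis even_zero)
  obtain n where n: "\<And>x. x \<ge> n \<Longrightarrow> poly p x \<ge> lead_coeff p" using poly_pinfty_gt_lc[OF lc] by blast
  define q where "q = - pcompose p [:0, -1:]"
  have dq: "degree q = degree p" unfolding q_def by (simp add: degree_pcompose)
  have "lead_coeff (pcompose p [:0, -1:]) = lead_coeff p * (-1) ^ degree p"
    by (subst lead_coeff_comp) auto
  hence lq: "lead_coeff q = lead_coeff p" unfolding q_def lead_coeff_minus using d by simp
  obtain m where m: "\<And>x. x \<ge> m \<Longrightarrow> poly q x \<ge> lead_coeff q" using poly_pinfty_gt_lc[of q] lq lc by auto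
  define a where "a = - \<bar>m\<bar> - 1"
  define b where "b = \<bar>n\<bar> + 1"
  have "poly q (-a) \<ge> lead_coeff p" using m[of "-a"] lq unfolding a_def by simp
  hence pa: "poly p a < 0" unfolding q_def using lc by (simp add: poly_pcompose)
  have "n \<le> b" unfolding b_def by linarith
  hence pb: "poly p b > 0" using n[of b] lc by linarith
  have "a < b" unfolding a_def b_def by simp
  from poly_IVT_pos[OF this pa pb] show ?thesis by blast
qed

lemma odd_degree_root:
  fixes p :: "real poly" assumes d: "odd (degree p)"
  shows "\<exists>x. poly p x = 0"
proof (cases "lead_coeff p > 0")
  case True then show ?thesis using odd_degree_root_pos[OF d] by blast
next
  case False
  have "p \<noteq> 0" using d by auto
  hence "lead_coeff p \<noteq> 0" by simp
  with False have "lead_coeff p < 0" by linarith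
  hence "lead_coeff (-p) > 0" by (simp add: lead_coeff_minus)
  from odd_degree_root_pos[of "-p"] this d show ?thesis by auto
qed

lemma odd_degree_odd_order:
  fixes p :: "real poly" assumes "odd (degree p)"
  shows "\<exists>x. odd (order x p)"
  using assms
proof (induction "degree p" arbitrary: p rule: less_induct)
  case less
  obtain r where r: "poly p r = 0" using odd_degree_root[OF less.prems] by blast
  have p0: "p \<noteq> 0" using less.prems by auto
  show ?case
  proof (cases "odd (order r p)")
    case True then show ?thesis by blast
  next
    case False
    define k where "k = order r p"
    obtain q where q: "p = [:-r,1:]^k * q" using order_decomp[OF p0] unfolding k_def by blast
    have q0: "q \<noteq> 0" using p0 q by auto
    have k0: "k \<noteq> 0" using r p0 order_root unfolding k_def by blast
    have dp: "degree p = k + degree q" using q q0 by (simp add: degree_mult_eq degree_power_eq)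
    have "odd (degree q)" using dp False less.prems unfolding k_def by simp
    moreover have "degree q < degree p" using dp k0 by simp
    ultimately obtain s where s: "odd (order s q)" using less.hyps by blast
    have "order s p = order s ([:-r,1:]^k) + order s q" using q p0 order_mult by metis
    moreover have "order s ([:-r,1:]^k) = (if s = r then k else 0)"
    proof (cases "s = r")
      case True then show ?thesis by (simp add: order_power_n_n)
    next
      case False
      hence "poly ([:-r,1:]^k) s \<noteq> 0" by (simp add: poly_power)
      then show ?thesis using False order_0I by metis
    qed
    ultimately have "odd (order s p)" using s False unfolding k_def by auto
    then show ?thesis by blast
  qed
qed

context Fctx begin

lemma Freals_root:
  fixes p :: "real poly"
  assumes cf: "\<And>i. coeff p i \<in> F_reals F" and p0: "p \<noteq> 0" and k: "odd (order r p)"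
  shows "r \<in> F_reals F"
proof -
  obtain q where q: "p = [:-r,1:]^order r p * q" "\<not> [:-r,1:] dvd q" using order_decomp[OF p0] by blast
  have qr: "poly q r \<noteq> 0" using q(2) poly_eq_0_iff_dvd by blast
  show ?thesis
  proof (cases "poly q r > 0")
    case True
    from Freals_root_core[OF cf q(1) True k] show ?thesis .
  next
    case False
    hence "poly (-q) r > 0" using qr by simp
    moreover have "-p = [:-r,1:]^order r p * (-q)" using q(1) by simp
    moreover have "coeff (-p) i \<in> F_reals F" for i using Freals_neg[OF cf[of i]] by simp
    ultimately show ?thesis using Freals_root_core[of "-p" r "order r p" "-q"] k by blast
  qed
qed

end

context Fctx begin

lemma Freals_sqrt: assumes "x \<in> F_reals F" "x \<ge> 0" shows "\<exists>y\<in>F_reals F. y * y = x"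
proof (cases "x = 0")
  case True then show ?thesis using Freals_nat[of 0] by auto
next
  case False
  define r where "r = sqrt x"
  have r0: "r > 0" using False assms(2) unfolding r_def by simp
  have rr: "r * r = x" using assms(2) unfolding r_def by simp
  define p where "p = [:-x, 0, 1:]"
  have cf: "coeff p i \<in> F_reals F" for i
  proof -
    have "coeff p i \<in> {-x, 0, 1}" unfolding p_def by (simp add: coeff_pCons split: nat.split)
    moreover have "-x \<in> F_reals F" by (rule Freals_neg[OF assms(1)])
    moreover have "(0::real) \<in> F_reals F" "(1::real) \<in> F_reals F" using Freals_nat[of 0] Freals_nat[of 1] by auto
    ultimately show ?thesis by auto
  qed
  have pe: "p = [:-r,1:]^1 * [:r,1:]" unfolding p_def using rr by (simp add: algebra_simps)
  have "r \<in> F_reals F" by (rule Freals_root_core[OF cf pe]) (use r0 in simp_all)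
  then show ?thesis using rr by blast
qed

lemma Freals_real_closed: "real_closed_subfield (F_reals F)"
  unfolding real_closed_subfield_def
proof (intro conjI Freals_subfield ballI impI allI)
  fix x :: real assume "x \<in> F_reals F" "0 \<le> x" thus "\<exists>y\<in>F_reals F. y * y = x" by (rule Freals_sqrt)
next
  fix p :: "real poly" assume a: "(\<forall>i. coeff p i \<in> F_reals F) \<and> odd (degree p)"
  obtain r where r: "odd (order r p)" using odd_degree_odd_order a by blast
  have p0: "p \<noteq> 0" using a by auto
  have "poly p r = 0" using r order_root by (metis even_zero)
  moreover have "r \<in> F_reals F" using Freals_root[OF _ p0 r] a by blast
  ultimately show "\<exists>x\<in>F_reals F. poly p x = 0" by blast
qed

end

theorem mainTheorem14:
  fixes F :: fclass
  assumes "standard_conditions F"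
    and "closed_under_minimizer F"
  shows "real_closed_subfield (F_reals F)"
proof -
  interpret Fctx F using assms by unfold_locales
  show ?thesis by (rule Freals_real_closed)
qed


end
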